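(* Let $\sigma$ be a completely erasing $k$-block substitution with $w_\epsilon\ne1^k$ that satisfies the optimality condition. Then for every $p\in\mathbb N$ the set $\mathcal P_p$ of $f_\sigma$-periodic points of period $p$ is uncountable, and the set $\mathcal P=\bigcup_{p\in\mathbb N}\mathcal P_p$ of all $f_\sigma$-periodic points is dense in $\mathbb I$.
   Context: Notation: $\mathbb I=[0,1]$. $\{0,1\}^*$ and $\{0,1\}^\omega$ denote finite and infinite binary words, and $\epsilon$ is the empty word. For a word $w$, set $0.w=\sum_iw_i2^{-i}$. For $x\in(0,1]$, $\widetilde x$ is the unique infinite binary expansion of $x$ not ending in $0^\infty$. Fix $k\ge2$. An erasing $k$-block substitution is a map $\sigma:\{0,1\}^k\to\{0,1\}^*$ with exactly one block $w_\epsilon$ such that $\sigma(w_\epsilon)=\epsilon$. $\sigma$ is alternating if there are $\sigma_1,\dots,\sigma_k:\{0,1\}\to\{0,1\}^*$ with $\sigma(b_1\cdots b_k)=\sigma_1(b_1)\cdots\sigma_k(b_k)$. It is then extended to all finite or infinite words by $\sigma(u)=\prod_j\sigma_{((j-1)\bmod k)+1}(u_j)$. $\sigma$ is completely erasing if it is erasing and alternating, and every $w\in\{0,1\}^*$ satisfies $\sigma^n(w)=\epsilon$ for some $n\in\mathbb N$. The map $f_\sigma:\mathbb I\to\mathbb I$ is defined by $f_\sigma(x)=0.\sigma(\widetilde x)$ if $x\in(0,1]$ and $\widetilde x\neq w_\epsilon^\infty$, and $f_\sigma(x)=0$ otherwise. Optimality condition: every $w\in\{0,1\}^\omega$ can be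 written as $w=\prod_{i\ge1}\sigma(b_i)$ with blocks $b_i\in\{0,1\}^k$ satisfying $\sigma(b_i)\ne\epsilon$. *)

theory Defs
  imports "HOL-Analysis.Analysis"
begin

(* Binary words: finite words are bool lists (True = 1, False = 0);
   infinite words are functions nat => bool, position 0 is the first letter.
   An alternating k-block substitution is given by its components
   s 0, ..., s (k-1) :: bool => bool list  (paper's sigma_1,...,sigma_k). *)

definition sigma_word :: "nat \<Rightarrow> (nat \<Rightarrow> bool \<Rightarrow> bool list) \<Rightarrow> bool list \<Rightarrow> bool list" where
  "sigma_word k s u = concat (map (\<lambda>j. s (j mod k) (u ! j)) [0..<length u])"

definition blocks :: "nat \<Rightarrow> bool list set" where
  "blocks k = {b. length b = k}"

definition erasing :: "nat \<Rightarrow> (nat \<Rightarrow> bool \<Rightarrow> bool list) \<Rightarrow> bool" where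
  "erasing k s \<longleftrightarrow> (\<exists>!b. b \<in> blocks k \<and> sigma_word k s b = [])"

definition w_eps :: "nat \<Rightarrow> (nat \<Rightarrow> bool \<Rightarrow> bool list) \<Rightarrow> bool list" where
  "w_eps k s = (THE b. b \<in> blocks k \<and> sigma_word k s b = [])"

definition completely_erasing :: "nat \<Rightarrow> (nat \<Rightarrow> bool \<Rightarrow> bool list) \<Rightarrow> bool" where
  "completely_erasing k s \<longleftrightarrow> erasing k s \<and> (\<forall>w. \<exists>n. (sigma_word k s ^^ n) w = [])"

definition fin_val :: "bool list \<Rightarrow> real" where
  "fin_val u = (\<Sum>i<length u. if u ! i then (1/2) ^ Suc i else 0)"

definition bin_val :: "(nat \<Rightarrow> bool) \<Rightarrow> real" where
  "bin_val w = (\<Sum>i. if w i then (1/2) ^ Suc i else 0)"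

(* 0.(U 0 U 1 U 2 ...) for the (finite or infinite) concatenation of finite words *)
definition concat_val :: "(nat \<Rightarrow> bool list) \<Rightarrow> real" where
  "concat_val U = (\<Sum>j. (1/2) ^ length (concat (map U [0..<j])) * fin_val (U j))"

definition tilde :: "real \<Rightarrow> (nat \<Rightarrow> bool)" where
  "tilde x = (THE w. bin_val w = x \<and> (\<exists>\<^sub>\<infinity>i. w i))"

(* sigma applied to an infinite word, as a sequence of finite words to be concatenated *)
definition sigma_inf :: "nat \<Rightarrow> (nat \<Rightarrow> bool \<Rightarrow> bool list) \<Rightarrow> (nat \<Rightarrow> bool) \<Rightarrow> nat \<Rightarrow> bool list" where
  "sigma_inf k s w = (\<lambda>j. s (j mod k) (w j))"

definition f_sigma :: "nat \<Rightarrow> (nat \<Rightarrow> bool \<Rightarrow> bool list) \<Rightarrow> real \<Rightarrow> real" where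
  "f_sigma k s x =
     (if 0 < x \<and> x \<le> 1 \<and> tilde x \<noteq> (\<lambda>i. w_eps k s ! (i mod k))
      then concat_val (sigma_inf k s (tilde x)) else 0)"

(* every infinite word is a concatenation of non-erased images of blocks *)
definition optimal :: "nat \<Rightarrow> (nat \<Rightarrow> bool \<Rightarrow> bool list) \<Rightarrow> bool" where
  "optimal k s \<longleftrightarrow> (\<forall>w :: nat \<Rightarrow> bool. \<exists>b :: nat \<Rightarrow> bool list.
     (\<forall>i. b i \<in> blocks k \<and> sigma_word k s (b i) \<noteq> []) \<and>
     (\<forall>n. w n = concat (map (\<lambda>i. sigma_word k s (b i)) [0..<Suc n]) ! n))"

definition periodic_points :: "(real \<Rightarrow> real) \<Rightarrow> nat \<Rightarrow> real set" where
  "periodic_points f p = {x \<in> {0..1}. (f ^^ p) x = x \<and> (\<forall>q. 0 < q \<and> q < p \<longrightarrow> (f ^^ q) x \<noteq> x)}"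

end

theory Submission
  imports Defs
begin

lemma uncountable_bool_seq: "\<not> countable (UNIV :: (nat \<Rightarrow> bool) set)"
proof
  assume "countable (UNIV :: (nat \<Rightarrow> bool) set)"
  then obtain f :: "nat \<Rightarrow> (nat \<Rightarrow> bool)" where "range f = UNIV"
    by (metis uncountable_def UNIV_not_empty)
  then obtain n where "f n = (\<lambda>m. \<not> f m m)" by (metis UNIV_I imageE)
  then show False by (metis)
qed

lemma fin_val_snoc: "fin_val (a @ [x]) = fin_val a + (if x then (1/2)^Suc (length a) else 0)"
  unfolding fin_val_def by (simp add: nth_append)

lemma fin_val_append: "fin_val (a @ b) = fin_val a + (1/2)^length a * fin_val b"
proof (induction b rule: rev_induct)
  case Nil then show ?case by (simp add: fin_val_def)
next
  case (snoc x b)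
  have "fin_val (a @ b @ [x]) = fin_val (a@b) + (if x then (1/2)^Suc (length (a@b)) else 0)"
    using fin_val_snoc[of "a@b" x] by simp
  also have "\<dots> = fin_val a + (1/2)^length a * fin_val (b @ [x])"
    using snoc by (simp add: fin_val_snoc power_add algebra_simps)
  finally show ?case by simp
qed

lemma bv_summable: "summable (\<lambda>i. if w i then (1/2::real)^Suc i else 0)"
proof (rule summable_comparison_test'[where g="\<lambda>i. (1/2::real)^Suc i"])
  show "summable (\<lambda>i. (1/2::real)^Suc i)"
    using summable_geometric[of "1/2::real"] summable_mult[of _ "1/2::real"] by simp
qed auto

lemma bv_le1: "bin_val w \<le> 1"
proof -
  have "bin_val w \<le> (\<Sum>i. (1/2::real)^Suc i)"
    unfolding bin_val_def
    apply (rule suminf_le)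
    using bv_summable summable_geometric[of "1/2::real"] summable_mult[of _ "1/2::real"] by auto
  also have "\<dots> = 1"
  proof -
    have "(\<lambda>i. 1/2 * (1/2::real)^i) sums (1/2 * 2)"
      using sums_mult[OF geometric_sums[of "1/2::real"], of "1/2"] by simp
    then show ?thesis by (simp add: sums_iff)
  qed
  finally show ?thesis .
qed

lemma bv_ge0: "0 \<le> bin_val w"
  unfolding bin_val_def by (rule suminf_nonneg[OF bv_summable]) auto

lemma bv_pos: "w i \<Longrightarrow> 0 < bin_val w"
proof -
  assume wi: "w i"
  have "(\<Sum>j\<in>{i}. if w j then (1/2::real)^Suc j else 0) \<le> bin_val w"
    unfolding bin_val_def by (rule sum_le_suminf[OF bv_summable]) auto
  then have "(1/2::real)^Suc i \<le> bin_val w" using wi by simp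
  moreover have "0 < (1/2::real)^Suc i" by (rule zero_less_power) simp
  ultimately show ?thesis by linarith
qed

lemma bv_split: "bin_val w = fin_val (map w [0..<N]) + (1/2)^N * bin_val (\<lambda>i. w (i+N))"
proof -
  have "bin_val w = (\<Sum>i. if w (i+N) then (1/2::real)^Suc (i+N) else 0)
      + (\<Sum>i<N. if w i then (1/2)^Suc i else 0)"
    unfolding bin_val_def using suminf_split_initial_segment[OF bv_summable, of w N] by simp
  also have "(\<Sum>i. if w (i+N) then (1/2::real)^Suc (i+N) else 0)
      = (\<Sum>i. (1/2)^N * (if w (i+N) then (1/2::real)^Suc i else 0))"
    by (rule suminf_cong) (simp add: power_add)
  also have "\<dots> = (1/2)^N * bin_val (\<lambda>i. w (i+N))"
    unfolding bin_val_def by (rule suminf_mult[OF bv_summable])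
  also have "(\<Sum>i<N. if w i then (1/2::real)^Suc i else 0) = fin_val (map w [0..<N])"
    unfolding fin_val_def by simp
  finally show ?thesis by simp
qed

lemma bv_split1: "bin_val w = (if w 0 then 1/2 else 0) + 1/2 * bin_val (\<lambda>i. w (Suc i))"
  using bv_split[of w 1] by (simp add: fin_val_def)

lemma bv_lt:
  fixes a b :: "nat \<Rightarrow> bool"
  assumes "\<exists>\<^sub>\<infinity>i. b i" "a n \<noteq> b n" "\<forall>m<n. a m = b m" "b n"
  shows "bin_val a < bin_val b"
proof -
  have pre: "map a [0..<n] = map b [0..<n]" using assms(3) by simp
  obtain i where i: "i > n" "b i" using assms(1) unfolding INFM_nat by blast
  have "0 < bin_val (\<lambda>j. b (Suc j + n))"
    by (rule bv_pos[of _ "i - Suc n"]) (use i in simp)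
  moreover have "\<not> a n" using assms(2,4) by simp
  moreover have e1: "bin_val (\<lambda>j. a (j+n)) = 0 + 1/2 * bin_val (\<lambda>j. a (Suc j + n))"
    using bv_split1[of "\<lambda>j. a (j+n)"] \<open>\<not> a n\<close> by simp
  moreover have e2: "bin_val (\<lambda>j. b (j+n)) = 1/2 + 1/2 * bin_val (\<lambda>j. b (Suc j + n))"
    using bv_split1[of "\<lambda>j. b (j+n)"] assms(4) by simp
  moreover have "bin_val (\<lambda>j. a (Suc j + n)) \<le> 1" by (rule bv_le1)
  ultimately have lt: "bin_val (\<lambda>j. a (j+n)) < bin_val (\<lambda>j. b (j+n))" by linarith
  have pos: "(0::real) < (1/2)^n" by simp
  have "bin_val a = fin_val (map a [0..<n]) + (1/2)^n * bin_val (\<lambda>j. a (j+n))" by (rule bv_split)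
  moreover have "bin_val b = fin_val (map a [0..<n]) + (1/2)^n * bin_val (\<lambda>j. b (j+n))"
    using bv_split[of b n] by (simp only: pre)
  moreover have "(1/2)^n * bin_val (\<lambda>j. a (j+n)) < (1/2)^n * bin_val (\<lambda>j. b (j+n))"
    using lt pos by simp
  ultimately show ?thesis by linarith
qed

lemma bv_inj:
  assumes "\<exists>\<^sub>\<infinity>i. w i" "\<exists>\<^sub>\<infinity>i. v i" "bin_val w = bin_val v"
  shows "w = v"
proof (rule ccontr)
  assume ne: "w \<noteq> v"
  have ex: "\<exists>n. w n \<noteq> v n" using ne by auto
  define n where "n = (LEAST n. w n \<noteq> v n)"
  have n1: "w n \<noteq> v n" unfolding n_def using ex by (rule LeastI_ex)
  have n2: "\<forall>m<n. w m = v m" unfolding n_def using not_less_Least by blast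
  note n = n1 n2
  show False
  proof (cases "v n")
    case True
    have "bin_val w < bin_val v"
      by (rule bv_lt[where a=w and b=v and n=n]) (use assms(2) n True in auto)
    then show ?thesis using assms(3) by simp
  next
    case False
    then have "w n" using n by simp
    have "bin_val v < bin_val w"
      by (rule bv_lt[where a=v and b=w and n=n]) (use assms(1) n \<open>w n\<close> in auto)
    then show ?thesis using assms(3) by simp
  qed
qed

lemma tilde_bv: "\<exists>\<^sub>\<infinity>i. w i \<Longrightarrow> tilde (bin_val w) = w"
  unfolding tilde_def by (rule the_equality) (auto intro: bv_inj)

lemma concat_val_eq:
  fixes U :: "nat \<Rightarrow> bool list" and W :: "nat \<Rightarrow> bool"
  assumes agree: "\<And>J i. i < length (concat (map U [0..<J])) \<Longrightarrow> concat (map U [0..<J]) ! i = W i"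
    and unb: "\<And>N. \<exists>J. N \<le> length (concat (map U [0..<J]))"
  shows "concat_val U = bin_val W"
proof -
  define cc where "cc J = concat (map U [0..<J])" for J
  have ps: "(\<Sum>j<J. (1/2)^length (cc j) * fin_val (U j)) = fin_val (cc J)" for J
  proof (induction J)
    case 0 then show ?case by (simp add: cc_def fin_val_def)
  next
    case (Suc J)
    have "cc (Suc J) = cc J @ U J" by (simp add: cc_def)
    then show ?case using Suc by (simp add: fin_val_append)
  qed
  define F where "F N = (\<Sum>i<N. if W i then (1/2::real)^Suc i else 0)" for N
  have F: "F \<longlonglongrightarrow> bin_val W"
    unfolding F_def bin_val_def using bv_summable[of W] summable_LIMSEQ by blast
  have fc: "fin_val (cc J) = F (length (cc J))" for J
    unfolding fin_val_def F_def using agree by (simp add: cc_def)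
  have mono: "length (cc J) \<le> length (cc J')" if "J \<le> J'" for J J'
  proof -
    have "[0..<J'] = [0..<J] @ [J..<J']" using that upt_add_eq_append[of 0 J "J'-J"] by simp
    then show ?thesis by (simp add: cc_def)
  qed
  have lim: "filterlim (\<lambda>J. length (cc J)) at_top sequentially"
    unfolding filterlim_at_top
  proof
    fix Z
    obtain J0 where "Z \<le> length (cc J0)" using unb[of Z] unfolding cc_def by blast
    then show "eventually (\<lambda>J. Z \<le> length (cc J)) sequentially"
      unfolding eventually_sequentially using mono by (meson le_trans)
  qed
  have "(\<lambda>J. F (length (cc J))) \<longlonglongrightarrow> bin_val W"
    using filterlim_compose[OF F lim] by (simp add: o_def)
  then have "(\<lambda>J. (\<Sum>j<J. (1/2)^length (cc j) * fin_val (U j))) \<longlonglongrightarrow> bin_val W"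
    using ps fc by simp
  then have "(\<lambda>j. (1/2)^length (cc j) * fin_val (U j)) sums bin_val W"
    unfolding sums_def .
  then show ?thesis unfolding concat_val_def cc_def by (simp add: sums_iff)
qed



lemma sw_append_gen:
  "sigma_word k s (a @ b) = sigma_word k s a @
     concat (map (\<lambda>j. s ((j + length a) mod k) (b ! j)) [0..<length b])"
proof -
  have u: "[0..<length a + length b] = [0..<length a] @ [length a..<length a + length b]"
    using upt_add_eq_append[of 0 "length a" "length b"] by simp
  have m: "[length a..<length a + length b] = map (\<lambda>j. j + length a) [0..<length b]"
    using map_add_upt[of "length a" "length b"] by (simp add: add.commute)
  have 1: "map (\<lambda>j. s (j mod k) ((a @ b) ! j)) [0..<length a] = map (\<lambda>j. s (j mod k) (a ! j)) [0..<length a]"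
    by (rule map_cong) (auto simp: nth_append)
  have 2: "map ((\<lambda>j. s (j mod k) ((a @ b) ! j)) \<circ> (\<lambda>j. j + length a)) [0..<length b]
      = map (\<lambda>j. s ((j + length a) mod k) (b ! j)) [0..<length b]"
    by (auto simp: nth_append)
  show ?thesis unfolding sigma_word_def length_append u map_append concat_append m map_map 1 2 ..
qed

lemma sw_prefix: "\<exists>t. sigma_word k s (a @ b) = sigma_word k s a @ t"
  using sw_append_gen by blast

lemma sw_take_prefix: "\<exists>t. sigma_word k s x = sigma_word k s (take J x) @ t"
  using sw_prefix[of k s "take J x" "drop J x"] by simp

lemma sw_Nil[simp]: "sigma_word k s [] = []"
  by (simp add: sigma_word_def)

lemma sw_append_aligned:
  assumes "length a mod k = 0"
  shows "sigma_word k s (a @ b) = sigma_word k s a @ sigma_word k s b"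
proof -
  have "(j + length a) mod k = j mod k" for j
    using assms by (metis add.right_neutral mod_add_right_eq)
  then show ?thesis unfolding sw_append_gen by (simp add: sigma_word_def)
qed

lemma sigma_inf_cc: "concat (map (sigma_inf k s w) [0..<J]) = sigma_word k s (map w [0..<J])"
  unfolding sigma_word_def sigma_inf_def by (intro arg_cong[where f=concat] map_cong) auto

definition Lb :: "nat \<Rightarrow> (nat \<Rightarrow> bool \<Rightarrow> bool list) \<Rightarrow> nat" where
  "Lb k s = (\<Sum>j<k. length (s j True) + length (s j False))"

lemma sw_len_block:
  assumes "b \<in> blocks k"
  shows "length (sigma_word k s b) \<le> Lb k s"
proof -
  have "length (sigma_word k s b) = (\<Sum>j\<leftarrow>[0..<k]. length (s (j mod k) (b ! j)))"
    using assms unfolding sigma_word_def blocks_def by (simp add: length_concat comp_def)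
  also have "\<dots> = (\<Sum>j<k. length (s j (b ! j)))"
  proof -
    have "(\<Sum>j\<leftarrow>[0..<k]. length (s (j mod k) (b ! j))) = (\<Sum>j\<in>set [0..<k]. length (s (j mod k) (b ! j)))"
      by (simp only: sum_set_upt_conv_sum_list_nat)
    also have "\<dots> = (\<Sum>j<k. length (s j (b ! j)))"
      by (rule sum.cong) auto
    finally show ?thesis .
  qed
  also have "\<dots> \<le> Lb k s" unfolding Lb_def
    by (intro sum_mono) (metis (full_types) le_add1 le_add2)
  finally show ?thesis .
qed

definition Eb :: "nat \<Rightarrow> (nat \<Rightarrow> bool \<Rightarrow> bool list) \<Rightarrow> nat \<Rightarrow> bool list" where
  "Eb k s m = concat (replicate m (w_eps k s))"

definition pad :: "nat \<Rightarrow> (nat \<Rightarrow> bool \<Rightarrow> bool list) \<Rightarrow> bool list \<Rightarrow> bool list" where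
  "pad k s v = v @ drop (length v mod k) (w_eps k s)"

definition piece :: "nat \<Rightarrow> (nat \<Rightarrow> bool \<Rightarrow> bool list) \<Rightarrow> bool list \<Rightarrow> bool list" where
  "piece k s v = (SOME b. b \<in> blocks k \<and> sigma_word k s b \<noteq> [] \<and> (\<exists>t. v = sigma_word k s b @ t))"

context
  fixes k :: nat and s :: "nat \<Rightarrow> bool \<Rightarrow> bool list"
  assumes kpos: "k \<ge> 1" and er: "erasing k s"
begin

lemma e_props: "w_eps k s \<in> blocks k" "sigma_word k s (w_eps k s) = []"
proof -
  have "w_eps k s \<in> blocks k \<and> sigma_word k s (w_eps k s) = []"
    using er unfolding erasing_def w_eps_def by (rule theI')
  then show "w_eps k s \<in> blocks k" "sigma_word k s (w_eps k s) = []" by auto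
qed

lemma e_len[simp]: "length (w_eps k s) = k"
  using e_props(1) by (simp add: blocks_def)

lemma e_unique: "b \<in> blocks k \<Longrightarrow> sigma_word k s b = [] \<Longrightarrow> b = w_eps k s"
  using er e_props unfolding erasing_def by blast

lemma e_comp: "j < k \<Longrightarrow> s j (w_eps k s ! j) = []"
proof -
  assume j: "j < k"
  have "s (j mod k) (w_eps k s ! j) \<in> set (map (\<lambda>j. s (j mod k) (w_eps k s ! j)) [0..<k])"
    using j by auto
  then show ?thesis using e_props(2) j unfolding sigma_word_def by simp
qed

lemma Eb_len[simp]: "length (Eb k s m) = k * m"
  unfolding Eb_def by (induction m) auto

lemma Eb_add: "Eb k s (a + b) = Eb k s a @ Eb k s b"
  unfolding Eb_def by (simp add: replicate_add)

lemma Eb_Suc: "Eb k s (Suc m) = w_eps k s @ Eb k s m"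
  unfolding Eb_def by simp

lemma sw_Eb[simp]: "sigma_word k s (Eb k s m) = []"
proof (induction m)
  case 0 then show ?case by (simp add: Eb_def)
next
  case (Suc m)
  then show ?case unfolding Eb_Suc by (simp add: sw_append_aligned e_props)
qed

lemma Eb_nth: "c < m \<Longrightarrow> t < k \<Longrightarrow> Eb k s m ! (k * c + t) = w_eps k s ! t"
proof (induction c arbitrary: m)
  case 0
  then obtain m' where "m = Suc m'" by (cases m) auto
  then show ?case using 0 by (simp add: Eb_Suc nth_append)
next
  case (Suc c)
  then obtain m' where m: "m = Suc m'" by (cases m) auto
  have "Eb k s m ! (k * Suc c + t) = Eb k s m' ! (k * c + t)"
    unfolding m Eb_Suc by (simp add: nth_append)
  then show ?case using Suc m by simp
qed

lemma pad_len: "length (pad k s v) mod k = 0"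
proof -
  have "length v mod k \<le> k" using kpos by (simp add: less_imp_le)
  then have "length (pad k s v) = length v - length v mod k + k"
    unfolding pad_def using mod_less_eq_dividend[of "length v" k] by simp
  also have "\<dots> = k * (length v div k) + k" by (simp add: minus_mod_eq_mult_div)
  finally show ?thesis by simp
qed

lemma sw_pad: "sigma_word k s (pad k s v) = sigma_word k s v"
proof -
  let ?r = "length v mod k"
  have r: "?r < k" using kpos by simp
  have z: "s ((j + length v) mod k) (drop ?r (w_eps k s) ! j) = []" if j: "j < k - ?r" for j
  proof -
    have "(j + length v) mod k = (j + ?r) mod k" by (metis mod_add_right_eq)
    also have "\<dots> = j + ?r" using j by simp
    finally have 1: "(j + length v) mod k = ?r + j" by simp
    have 2: "drop ?r (w_eps k s) ! j = w_eps k s ! (?r + j)" using r j by simp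
    show ?thesis unfolding 1 2 by (rule e_comp) (use j in simp)
  qed
  have "concat (map (\<lambda>j. s ((j + length v) mod k) (drop ?r (w_eps k s) ! j)) [0..<length (drop ?r (w_eps k s))]) = []"
    using z by simp
  then show ?thesis unfolding pad_def sw_append_gen by simp
qed

end

context
  fixes k :: nat and s :: "nat \<Rightarrow> bool \<Rightarrow> bool list"
  assumes opt: "optimal k s"
begin

lemma piece_ex:
  assumes "Lb k s \<le> length v"
  shows "\<exists>b. b \<in> blocks k \<and> sigma_word k s b \<noteq> [] \<and> (\<exists>t. v = sigma_word k s b @ t)"
proof -
  define vi where "vi n = (if n < length v then v ! n else False)" for n
  obtain bb where bb: "\<forall>i. bb i \<in> blocks k \<and> sigma_word k s (bb i) \<noteq> []"
    and eq: "\<forall>n. vi n = concat (map (\<lambda>i. sigma_word k s (bb i)) [0..<Suc n]) ! n"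
    using opt unfolding optimal_def by blast
  define c where "c = sigma_word k s (bb 0)"
  have cl: "length c \<le> length v" using sw_len_block[of "bb 0" k s] bb assms c_def by fastforce
  have "c ! n = v ! n" if n: "n < length c" for n
  proof -
    have "[0..<Suc n] = 0 # [1..<Suc n]" by (simp add: upt_rec)
    then have "concat (map (\<lambda>i. sigma_word k s (bb i)) [0..<Suc n]) ! n = c ! n"
      using n by (simp add: c_def nth_append)
    then show ?thesis using eq vi_def n cl by (metis less_le_trans)
  qed
  then have "take (length c) v = c" using cl by (intro nth_equalityI) auto
  then have "v = c @ drop (length c) v" by (metis append_take_drop_id)
  then show ?thesis using bb c_def by blast
qed

lemma piece_props:
  assumes "Lb k s \<le> length v"
  shows "piece k s v \<in> blocks k" "sigma_word k s (piece k s v) \<noteq> []"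
    "\<exists>t. v = sigma_word k s (piece k s v) @ t"
  using someI_ex[OF piece_ex[OF assms]] unfolding piece_def by blast+

end



definition aa :: "nat \<Rightarrow> (nat \<Rightarrow> bool \<Rightarrow> bool list) \<Rightarrow> bool \<Rightarrow> nat \<Rightarrow> nat" where
  "aa k s bt j = Lb k s + (if j = 0 \<and> bt then 1 else 0)"

definition Rp :: "nat \<Rightarrow> (nat \<Rightarrow> bool \<Rightarrow> bool list) \<Rightarrow> nat \<Rightarrow> bool \<Rightarrow> (nat \<Rightarrow> bool list) \<Rightarrow> nat \<Rightarrow> bool list" where
  "Rp k s p bt X i = drop (length (sigma_word k s (X (Suc i mod p)))) (X i) @ Eb k s (aa k s bt i)"

definition Pc :: "nat \<Rightarrow> (nat \<Rightarrow> bool \<Rightarrow> bool list) \<Rightarrow> nat \<Rightarrow> bool \<Rightarrow> (nat \<Rightarrow> bool list) \<Rightarrow> nat \<Rightarrow> bool list" where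
  "Pc k s p bt X j = piece k s (Rp k s p bt X ((j + p - 1) mod p))"

definition stp :: "nat \<Rightarrow> (nat \<Rightarrow> bool \<Rightarrow> bool list) \<Rightarrow> nat \<Rightarrow> bool \<Rightarrow> (nat \<Rightarrow> bool list) \<Rightarrow> nat \<Rightarrow> bool list" where
  "stp k s p bt X j = X j @ Eb k s (aa k s bt j) @ Pc k s p bt X j"

primrec Xs :: "nat \<Rightarrow> (nat \<Rightarrow> bool \<Rightarrow> bool list) \<Rightarrow> nat \<Rightarrow> (nat \<Rightarrow> bool) \<Rightarrow> (nat \<Rightarrow> bool list) \<Rightarrow> nat \<Rightarrow> nat \<Rightarrow> bool list" where
  "Xs k s p \<beta> X0 0 = X0"
| "Xs k s p \<beta> X0 (Suc n) = stp k s p (\<beta> n) (Xs k s p \<beta> X0 n)"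

definition Wd :: "nat \<Rightarrow> (nat \<Rightarrow> bool \<Rightarrow> bool list) \<Rightarrow> nat \<Rightarrow> (nat \<Rightarrow> bool) \<Rightarrow> (nat \<Rightarrow> bool list) \<Rightarrow> nat \<Rightarrow> nat \<Rightarrow> bool" where
  "Wd k s p \<beta> X0 j i = Xs k s p \<beta> X0 (Suc i) j ! i"

definition Inv :: "nat \<Rightarrow> (nat \<Rightarrow> bool \<Rightarrow> bool list) \<Rightarrow> nat \<Rightarrow> (nat \<Rightarrow> bool list) \<Rightarrow> bool" where
  "Inv k s p X \<longleftrightarrow> (\<forall>j<p. length (X j) mod k = 0 \<and> (\<exists>r. X j = sigma_word k s (X (Suc j mod p)) @ r))"

lemma prv_nxt: "j < (p::nat) \<Longrightarrow> (Suc j mod p + p - 1) mod p = j"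
proof (cases "Suc j < p")
  case True
  assume "j < p"
  then have "(Suc j mod p + p - 1) mod p = (j + p) mod p" using True by simp
  then show ?thesis using \<open>j < p\<close> by simp
next
  case False
  assume "j < p"
  then have "Suc j = p" using False by simp
  then show ?thesis by simp
qed

lemma Xs_prefix: "n \<le> m \<Longrightarrow> \<exists>t. Xs k s p \<beta> X0 m j = Xs k s p \<beta> X0 n j @ t"
proof (induction m)
  case 0 then show ?case by simp
next
  case (Suc m)
  show ?case
  proof (cases "n = Suc m")
    case True then show ?thesis by simp
  next
    case False
    then obtain t where "Xs k s p \<beta> X0 m j = Xs k s p \<beta> X0 n j @ t" using Suc by force
    then show ?thesis by (simp add: stp_def)
  qed
qed

context
  fixes k :: nat and s :: "nat \<Rightarrow> bool \<Rightarrow> bool list" and p :: nat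
  assumes kpos: "k \<ge> 1" and er: "erasing k s" and opt: "optimal k s" and ppos: "p \<ge> 1"
begin

lemma Rp_len: "Lb k s \<le> length (Rp k s p bt X i)"
proof -
  have "Lb k s \<le> aa k s bt i" by (simp add: aa_def)
  also have "\<dots> \<le> k * aa k s bt i" using kpos by simp
  finally show ?thesis by (simp add: Rp_def Eb_len[OF kpos er])
qed

lemma Pc_props:
  "Pc k s p bt X j \<in> blocks k" "sigma_word k s (Pc k s p bt X j) \<noteq> []"
  "\<exists>t. Rp k s p bt X ((j + p - 1) mod p) = sigma_word k s (Pc k s p bt X j) @ t"
  unfolding Pc_def using piece_props[OF opt Rp_len] by auto

lemma Pc_len[simp]: "length (Pc k s p bt X j) = k"
  using Pc_props(1) by (simp add: blocks_def)

lemma Lb_pos: "1 \<le> Lb k s"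
proof -
  have "length (sigma_word k s (Pc k s p False X 0)) \<le> Lb k s"
    by (rule sw_len_block[OF Pc_props(1)])
  moreover have "sigma_word k s (Pc k s p False X 0) \<noteq> []" by (rule Pc_props(2))
  ultimately show ?thesis by (cases "sigma_word k s (Pc k s p False X 0)") auto
qed

lemma stp_len: "length (stp k s p bt X j) = length (X j) + k * aa k s bt j + k"
  by (simp add: stp_def Eb_len[OF kpos er])

lemma stp_sw:
  assumes "length (X j) mod k = 0"
  shows "sigma_word k s (stp k s p bt X j) = sigma_word k s (X j) @ sigma_word k s (Pc k s p bt X j)"
proof -
  have "length (Eb k s (aa k s bt j)) mod k = 0" by (simp add: Eb_len[OF kpos er])
  then show ?thesis unfolding stp_def
    using assms by (simp add: sw_append_aligned sw_Eb[OF kpos er])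
qed

lemma stp_inv:
  assumes inv: "Inv k s p X"
  shows "Inv k s p (stp k s p bt X)"
  unfolding Inv_def
proof (intro allI impI conjI)
  fix j assume j: "j < p"
  define nj where "nj = Suc j mod p"
  have nj: "nj < p" using ppos nj_def by simp
  show "length (stp k s p bt X j) mod k = 0"
    using inv j unfolding stp_len Inv_def by simp
  obtain r where r: "X j = sigma_word k s (X nj) @ r" using inv j nj_def unfolding Inv_def by blast
  have rp: "Rp k s p bt X j = r @ Eb k s (aa k s bt j)"
    unfolding Rp_def using r nj_def by simp
  have pv: "(nj + p - 1) mod p = j" using prv_nxt[OF j] nj_def by simp
  obtain t where t: "Rp k s p bt X j = sigma_word k s (Pc k s p bt X nj) @ t"
    using Pc_props(3)[of bt X nj] pv by auto
  have s: "sigma_word k s (stp k s p bt X nj) = sigma_word k s (X nj) @ sigma_word k s (Pc k s p bt X nj)"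
    by (rule stp_sw) (use inv nj in \<open>simp add: Inv_def\<close>)
  have "stp k s p bt X j = sigma_word k s (X nj) @ (r @ Eb k s (aa k s bt j)) @ Pc k s p bt X j"
    unfolding stp_def using r by simp
  also have "\<dots> = sigma_word k s (stp k s p bt X nj) @ t @ Pc k s p bt X j"
    unfolding s using rp t by simp
  finally show "\<exists>r. stp k s p bt X j = sigma_word k s (stp k s p bt X (Suc j mod p)) @ r"
    using nj_def by blast
qed

lemma Xs_inv: "Inv k s p X0 \<Longrightarrow> Inv k s p (Xs k s p \<beta> X0 n)"
proof (induction n)
  case 0 then show ?case by (simp only: Xs.simps)
next
  case (Suc n) then have "Inv k s p (Xs k s p \<beta> X0 n)" by simp
  then show ?case unfolding Xs.simps by (rule stp_inv)
qed

lemma Xs_len: "length (X0 j) + n \<le> length (Xs k s p \<beta> X0 n j)"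
proof (induction n)
  case 0 then show ?case by simp
next
  case (Suc n)
  have "length (Xs k s p \<beta> X0 (Suc n) j) = length (Xs k s p \<beta> X0 n j) + k * aa k s (\<beta> n) j + k"
    by (simp only: Xs.simps stp_len)
  then show ?case using Suc kpos by linarith
qed

lemma Xs_swlen:
  assumes "Inv k s p X0" "j < p"
  shows "n \<le> length (sigma_word k s (Xs k s p \<beta> X0 n j))"
proof (induction n)
  case 0 then show ?case by simp
next
  case (Suc n)
  have "length (Xs k s p \<beta> X0 n j) mod k = 0" using Xs_inv[OF assms(1)] assms(2) by (simp add: Inv_def)
  then have "sigma_word k s (Xs k s p \<beta> X0 (Suc n) j) =
     sigma_word k s (Xs k s p \<beta> X0 n j) @ sigma_word k s (Pc k s p (\<beta> n) (Xs k s p \<beta> X0 n) j)"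
    by (simp add: stp_sw)
  then have "length (sigma_word k s (Xs k s p \<beta> X0 (Suc n) j)) =
     length (sigma_word k s (Xs k s p \<beta> X0 n j)) + length (sigma_word k s (Pc k s p (\<beta> n) (Xs k s p \<beta> X0 n) j))"
    by simp
  moreover have "0 < length (sigma_word k s (Pc k s p (\<beta> n) (Xs k s p \<beta> X0 n) j))"
    using Pc_props(2)[of "\<beta> n" "Xs k s p \<beta> X0 n" j] by simp
  ultimately show ?case using Suc by linarith
qed

lemma W_agree:
  assumes "i < length (Xs k s p \<beta> X0 n j)"
  shows "Wd k s p \<beta> X0 j i = Xs k s p \<beta> X0 n j ! i"
proof -
  let ?m = "max n (Suc i)"
  have "n \<le> ?m" "Suc i \<le> ?m" by simp_all
  then obtain t1 t2 where t1: "Xs k s p \<beta> X0 ?m j = Xs k s p \<beta> X0 n j @ t1"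
    and t2: "Xs k s p \<beta> X0 ?m j = Xs k s p \<beta> X0 (Suc i) j @ t2"
    using Xs_prefix[of n ?m k s p \<beta> X0 j] Xs_prefix[of "Suc i" ?m k s p \<beta> X0 j] by blast
  have "i < length (Xs k s p \<beta> X0 (Suc i) j)" using Xs_len[of X0 j "Suc i" \<beta>] by linarith
  then have "Xs k s p \<beta> X0 ?m j ! i = Xs k s p \<beta> X0 (Suc i) j ! i" unfolding t2 by (simp add: nth_append)
  moreover have "Xs k s p \<beta> X0 ?m j ! i = Xs k s p \<beta> X0 n j ! i" unfolding t1 using assms by (simp add: nth_append)
  ultimately show ?thesis unfolding Wd_def by simp
qed

lemma map_W: "J \<le> length (Xs k s p \<beta> X0 n j) \<Longrightarrow>
   map (Wd k s p \<beta> X0 j) [0..<J] = take J (Xs k s p \<beta> X0 n j)"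
  by (intro nth_equalityI) (auto simp: W_agree)

lemma W_rel:
  fixes \<beta> :: "nat \<Rightarrow> bool"
  assumes inv: "Inv k s p X0" and j: "j < p"
  defines "U \<equiv> sigma_inf k s (Wd k s p \<beta> X0 (Suc j mod p))"
  shows "\<And>J i. i < length (concat (map U [0..<J])) \<Longrightarrow> concat (map U [0..<J]) ! i = Wd k s p \<beta> X0 j i"
    and "\<And>N. \<exists>J. N \<le> length (concat (map U [0..<J]))"
proof -
  let ?nj = "Suc j mod p"
  have nj: "?nj < p" using ppos by simp
  fix J i assume i: "i < length (concat (map U [0..<J]))"
  have "J \<le> length (Xs k s p \<beta> X0 J ?nj)" using Xs_len[of X0 ?nj J \<beta>] by simp
  then have cc: "concat (map U [0..<J]) = sigma_word k s (take J (Xs k s p \<beta> X0 J ?nj))"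
    unfolding U_def sigma_inf_cc using map_W by simp
  obtain t1 where t1: "sigma_word k s (Xs k s p \<beta> X0 J ?nj) = concat (map U [0..<J]) @ t1"
    using sw_take_prefix cc by metis
  obtain r where r: "Xs k s p \<beta> X0 J j = sigma_word k s (Xs k s p \<beta> X0 J ?nj) @ r"
    using Xs_inv[OF inv, of \<beta> J] j unfolding Inv_def by blast
  have xs: "Xs k s p \<beta> X0 J j = concat (map U [0..<J]) @ t1 @ r" using r t1 by simp
  have "i < length (Xs k s p \<beta> X0 J j)" using xs i by simp
  then have "Wd k s p \<beta> X0 j i = Xs k s p \<beta> X0 J j ! i" by (rule W_agree)
  also have "\<dots> = concat (map U [0..<J]) ! i" unfolding xs using i by (simp add: nth_append)
  finally show "concat (map U [0..<J]) ! i = Wd k s p \<beta> X0 j i" by simp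
next
  let ?nj = "Suc j mod p"
  have nj: "?nj < p" using ppos by simp
  fix N
  let ?J = "length (Xs k s p \<beta> X0 N ?nj)"
  have "concat (map U [0..<?J]) = sigma_word k s (Xs k s p \<beta> X0 N ?nj)"
    unfolding U_def sigma_inf_cc using map_W[where J="?J" and n=N and j="?nj"] by simp
  then show "\<exists>J. N \<le> length (concat (map U [0..<J]))"
    using Xs_swlen[OF inv nj] by metis
qed

lemma klt: "c < m \<Longrightarrow> t < k \<Longrightarrow> k * c + t < k * (m::nat)"
proof -
  assume c: "c < m" and t: "t < k"
  have "k * c + t < k * Suc c" using t by simp
  also have "k * Suc c \<le> k * m" by (rule mult_le_mono2[OF Suc_leI[OF c]])
  finally show ?thesis .
qed

lemma nth_blk_e:
  "c < m \<Longrightarrow> t < k \<Longrightarrow> (A @ Eb k s m @ Q) ! (length A + k * c + t) = w_eps k s ! t"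
proof -
  assume "c < m" "t < k"
  then have "k * c + t < k * m" by (rule klt)
  then show ?thesis using Eb_nth[OF kpos er \<open>c < m\<close> \<open>t < k\<close>]
    by (simp add: nth_append Eb_len[OF kpos er] add.assoc)
qed

lemma nth_blk_Q:
  "(A @ Eb k s m @ Q) ! (length A + k * m + t) = Q ! t"
  by (simp add: nth_append Eb_len[OF kpos er] add.assoc)

lemma Xs_Suc_nth_Q:
  "t < k \<Longrightarrow> Wd k s p \<beta> X0 j (length (Xs k s p \<beta> X0 n j) + k * aa k s (\<beta> n) j + t)
     = Pc k s p (\<beta> n) (Xs k s p \<beta> X0 n) j ! t"
proof -
  assume t: "t < k"
  have "length (Xs k s p \<beta> X0 n j) + k * aa k s (\<beta> n) j + t < length (Xs k s p \<beta> X0 (Suc n) j)"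
    using t by (simp add: stp_len)
  then have "Wd k s p \<beta> X0 j (length (Xs k s p \<beta> X0 n j) + k * aa k s (\<beta> n) j + t)
     = Xs k s p \<beta> X0 (Suc n) j ! (length (Xs k s p \<beta> X0 n j) + k * aa k s (\<beta> n) j + t)"
    by (rule W_agree)
  also have "\<dots> = Pc k s p (\<beta> n) (Xs k s p \<beta> X0 n) j ! t"
    unfolding Xs.simps stp_def by (rule nth_blk_Q)
  finally show ?thesis .
qed

lemma Xs_Suc_nth_e:
  "c < aa k s (\<beta> n) j \<Longrightarrow> t < k \<Longrightarrow> Wd k s p \<beta> X0 j (length (Xs k s p \<beta> X0 n j) + k * c + t)
     = w_eps k s ! t"
proof -
  assume c: "c < aa k s (\<beta> n) j" and t: "t < k"
  have "k * c + t < k * aa k s (\<beta> n) j" using c t by (rule klt)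
  then have "length (Xs k s p \<beta> X0 n j) + k * c + t < length (Xs k s p \<beta> X0 (Suc n) j)"
    by (simp add: stp_len)
  then have "Wd k s p \<beta> X0 j (length (Xs k s p \<beta> X0 n j) + k * c + t)
     = Xs k s p \<beta> X0 (Suc n) j ! (length (Xs k s p \<beta> X0 n j) + k * c + t)"
    by (rule W_agree)
  also have "\<dots> = w_eps k s ! t"
    unfolding Xs.simps stp_def by (rule nth_blk_e[OF c t])
  finally show ?thesis .
qed

lemma blk_ne_e: "Pc k s p bt X j \<noteq> w_eps k s"
  using Pc_props(2) e_props(2)[OF kpos er] by metis

lemma W_ones:
  assumes inv: "Inv k s p X0" and j: "j < p"
  shows "\<exists>\<^sub>\<infinity>i. Wd k s p \<beta> X0 j i"
  unfolding INFM_nat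
proof
  fix m
  let ?X = "Xs k s p \<beta> X0 (Suc m)"
  let ?L = "length (?X j)"
  let ?a = "aa k s (\<beta> (Suc m)) j"
  let ?P = "Pc k s p (\<beta> (Suc m)) ?X j"
  have L: "Suc m \<le> ?L" using Xs_len[of X0 j "Suc m" \<beta>] by simp
  have a: "0 < ?a" using Lb_pos by (simp add: aa_def)
  show "\<exists>n>m. Wd k s p \<beta> X0 j n"
  proof (cases "\<exists>t<k. w_eps k s ! t")
    case True
    then obtain t where t: "t < k" "w_eps k s ! t" by blast
    have "Wd k s p \<beta> X0 j (?L + k * 0 + t) = w_eps k s ! t"
      by (rule Xs_Suc_nth_e) (use a t in auto)
    then show ?thesis using t L by (intro exI[of _ "?L + t"]) auto
  next
    case False
    have "\<exists>t<k. ?P ! t"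
    proof (rule ccontr)
      assume "\<not> (\<exists>t<k. ?P ! t)"
      then have "?P = w_eps k s" using False
        by (intro nth_equalityI) (auto simp: e_len[OF kpos er])
      then show False using blk_ne_e by blast
    qed
    then obtain t where t: "t < k" "?P ! t" by blast
    have "Wd k s p \<beta> X0 j (?L + k * ?a + t) = ?P ! t"
      by (rule Xs_Suc_nth_Q) (use t in auto)
    then show ?thesis using t L by (intro exI[of _ "?L + k * ?a + t"]) auto
  qed
qed

lemma W_not_eper:
  assumes inv: "Inv k s p X0" and j: "j < p"
  shows "Wd k s p \<beta> X0 j \<noteq> (\<lambda>i. w_eps k s ! (i mod k))"
proof
  assume eq: "Wd k s p \<beta> X0 j = (\<lambda>i. w_eps k s ! (i mod k))"
  let ?q = "length (X0 j) + k * aa k s (\<beta> 0) j"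
  let ?P = "Pc k s p (\<beta> 0) X0 j"
  have q: "?q mod k = 0" using inv j by (simp add: Inv_def)
  have "?P ! t = w_eps k s ! t" if t: "t < k" for t
  proof -
    have "?P ! t = Wd k s p \<beta> X0 j (?q + t)" using Xs_Suc_nth_Q[OF t, of \<beta> X0 j 0] by simp
    also have "\<dots> = w_eps k s ! ((?q + t) mod k)" using eq by simp
    also have "(?q + t) mod k = t" using q t by (metis mod_add_left_eq mod_less add_0)
    finally show ?thesis .
  qed
  then have "?P = w_eps k s" by (intro nth_equalityI) (auto simp: e_len[OF kpos er])
  then show False using blk_ne_e by blast
qed

end



context
  fixes k :: nat and s :: "nat \<Rightarrow> bool \<Rightarrow> bool list" and p :: nat
  assumes kpos: "k \<ge> 1" and er: "erasing k s" and opt: "optimal k s" and ppos: "p \<ge> 1"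
begin

lemma W_pos: "Inv k s p X0 \<Longrightarrow> j < p \<Longrightarrow> 0 < bin_val (Wd k s p \<beta> X0 j)"
proof -
  assume a: "Inv k s p X0" "j < p"
  obtain i where "Wd k s p \<beta> X0 j i"
    using W_ones[OF kpos er opt ppos a, of \<beta>] unfolding INFM_nat by blast
  then show ?thesis by (rule bv_pos)
qed

lemma f_step:
  assumes inv: "Inv k s p X0" and j: "j < p"
  shows "f_sigma k s (bin_val (Wd k s p \<beta> X0 (Suc j mod p))) = bin_val (Wd k s p \<beta> X0 j)"
proof -
  let ?nj = "Suc j mod p"
  have nj: "?nj < p" using ppos by simp
  let ?w = "Wd k s p \<beta> X0 ?nj"
  have ones: "\<exists>\<^sub>\<infinity>i. ?w i" by (rule W_ones[OF kpos er opt ppos inv nj])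
  have ne: "?w \<noteq> (\<lambda>i. w_eps k s ! (i mod k))" by (rule W_not_eper[OF kpos er opt ppos inv nj])
  have pos: "0 < bin_val ?w" by (rule W_pos[OF inv nj])
  have t: "tilde (bin_val ?w) = ?w" by (rule tilde_bv[OF ones])
  have "f_sigma k s (bin_val ?w) = concat_val (sigma_inf k s ?w)"
    unfolding f_sigma_def using pos bv_le1[of ?w] t ne by simp
  also have "\<dots> = bin_val (Wd k s p \<beta> X0 j)"
    by (rule concat_val_eq) (rule W_rel[OF kpos er opt ppos inv j], assumption,
        rule W_rel[OF kpos er opt ppos inv j])
  finally show ?thesis .
qed

lemma f_iter:
  assumes inv: "Inv k s p X0"
  shows "(f_sigma k s ^^ q) (bin_val (Wd k s p \<beta> X0 ((m + q) mod p))) = bin_val (Wd k s p \<beta> X0 (m mod p))"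
proof (induction q arbitrary: m)
  case 0 then show ?case by simp
next
  case (Suc q)
  have "(f_sigma k s ^^ Suc q) (bin_val (Wd k s p \<beta> X0 ((m + Suc q) mod p)))
      = f_sigma k s ((f_sigma k s ^^ q) (bin_val (Wd k s p \<beta> X0 ((Suc m + q) mod p))))"
    by simp
  also have "\<dots> = f_sigma k s (bin_val (Wd k s p \<beta> X0 (Suc m mod p)))" using Suc.IH[of "Suc m"] by simp
  also have "\<dots> = f_sigma k s (bin_val (Wd k s p \<beta> X0 (Suc (m mod p) mod p)))"
    by (simp add: mod_Suc_eq)
  also have "\<dots> = bin_val (Wd k s p \<beta> X0 (m mod p))"
    by (rule f_step[OF inv]) (use ppos in simp)
  finally show ?case .
qed

lemma f_iter0:
  assumes inv: "Inv k s p X0" and q: "q \<le> p"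
  shows "(f_sigma k s ^^ q) (bin_val (Wd k s p \<beta> X0 0)) = bin_val (Wd k s p \<beta> X0 ((p - q) mod p))"
  using f_iter[OF inv, where q=q and m="p - q" and \<beta>=\<beta>] q by simp

end

lemma approx:
  fixes y :: real
  assumes "0 \<le> y" "y \<le> 1"
  shows "\<exists>u. length u = N \<and> fin_val u \<le> y \<and> y \<le> fin_val u + (1/2)^N"
proof (induction N)
  case 0 then show ?case using assms by (simp add: fin_val_def)
next
  case (Suc N)
  then obtain u where u: "length u = N" "fin_val u \<le> y" "y \<le> fin_val u + (1/2)^N" by blast
  show ?case
  proof (cases "fin_val u + (1/2)^Suc N \<le> y")
    case True
    have "fin_val (u @ [True]) = fin_val u + (1/2)^Suc N" using u by (simp add: fin_val_snoc)
    then show ?thesis using True u by (intro exI[of _ "u @ [True]"]) auto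
  next
    case False
    have "fin_val (u @ [False]) = fin_val u" by (simp add: fin_val_snoc)
    then show ?thesis using False u by (intro exI[of _ "u @ [False]"]) auto
  qed
qed



context
  fixes k :: nat and s :: "nat \<Rightarrow> bool \<Rightarrow> bool list" and p :: nat
  assumes kpos: "k \<ge> 1" and er: "erasing k s" and opt: "optimal k s" and ppos: "p \<ge> 1"
begin

lemma W_distinct:
  assumes j: "0 < j" "j < p"
  shows "Wd k s p \<beta> (\<lambda>j. Eb k s (2*j)) j \<noteq> Wd k s p \<beta> (\<lambda>j. Eb k s (2*j)) 0"
proof
  let ?X0 = "\<lambda>j. Eb k s (2*j)"
  assume eq: "Wd k s p \<beta> ?X0 j = Wd k s p \<beta> ?X0 0"
  let ?c = "aa k s (\<beta> 0) 0"
  let ?P = "Pc k s p (\<beta> 0) ?X0 0"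
  have "?P ! t = w_eps k s ! t" if t: "t < k" for t
  proof -
    have "Wd k s p \<beta> ?X0 0 (length (Xs k s p \<beta> ?X0 0 0) + k * ?c + t) = ?P ! t"
      using Xs_Suc_nth_Q[OF kpos er opt ppos t, of \<beta> ?X0 0 0] by simp
    then have 1: "Wd k s p \<beta> ?X0 0 (k * ?c + t) = ?P ! t" by (simp add: Eb_len[OF kpos er])
    have aj: "aa k s (\<beta> 0) j = Lb k s" using j by (simp add: aa_def)
    have c: "?c < 2 * j + Lb k s" using j by (simp add: aa_def)
    have x1: "Xs k s p \<beta> ?X0 1 j = Eb k s (2 * j + Lb k s) @ Pc k s p (\<beta> 0) ?X0 j"
      by (simp add: stp_def aj Eb_add[OF kpos er])
    have lt: "k * ?c + t < k * (2 * j + Lb k s)" by (rule klt[OF kpos er opt ppos c t])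
    have "Wd k s p \<beta> ?X0 j (k * ?c + t) = Xs k s p \<beta> ?X0 1 j ! (k * ?c + t)"
    proof (rule W_agree[OF kpos er opt ppos])
      have "k * (2 * j + Lb k s) \<le> length (Xs k s p \<beta> ?X0 1 j)"
        unfolding x1 by (simp add: Eb_len[OF kpos er])
      then show "k * ?c + t < length (Xs k s p \<beta> ?X0 1 j)" using lt by linarith
    qed
    also have "\<dots> = Eb k s (2 * j + Lb k s) ! (k * ?c + t)"
      unfolding x1 using lt by (simp add: nth_append Eb_len[OF kpos er])
    also have "\<dots> = w_eps k s ! t" by (rule Eb_nth[OF kpos er c t])
    finally show ?thesis using 1 eq by simp
  qed
  then have "?P = w_eps k s" by (intro nth_equalityI) (auto simp: e_len[OF kpos er] Pc_len[OF kpos er opt ppos])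
  then show False using blk_ne_e[OF kpos er opt ppos] by blast
qed

lemma W_split:
  assumes "\<gamma> n" "\<not> \<delta> n" "Xs k s p \<gamma> X0 n = Xs k s p \<delta> X0 n"
  shows "Wd k s p \<gamma> X0 0 \<noteq> Wd k s p \<delta> X0 0"
proof
  assume eq: "Wd k s p \<gamma> X0 0 = Wd k s p \<delta> X0 0"
  let ?X = "Xs k s p \<delta> X0 n"
  let ?q = "length (?X 0) + k * Lb k s"
  let ?P = "Pc k s p (\<delta> n) ?X 0"
  have "?P ! t = w_eps k s ! t" if t: "t < k" for t
  proof -
    have "Wd k s p \<gamma> X0 0 (length (Xs k s p \<gamma> X0 n 0) + k * Lb k s + t) = w_eps k s ! t"
      by (rule Xs_Suc_nth_e[OF kpos er opt ppos _ t]) (use assms(1) in \<open>simp add: aa_def\<close>)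
    then have 1: "Wd k s p \<gamma> X0 0 (?q + t) = w_eps k s ! t" using assms(3) by simp
    have "Wd k s p \<delta> X0 0 (length (?X 0) + k * aa k s (\<delta> n) 0 + t) = ?P ! t"
      by (rule Xs_Suc_nth_Q[OF kpos er opt ppos t])
    then have 2: "Wd k s p \<delta> X0 0 (?q + t) = ?P ! t" using assms(2) by (simp add: aa_def)
    show ?thesis using 1 2 eq by simp
  qed
  then have "?P = w_eps k s" by (intro nth_equalityI) (auto simp: e_len[OF kpos er] Pc_len[OF kpos er opt ppos])
  then show False using blk_ne_e[OF kpos er opt ppos] by blast
qed

lemma Xs_eq_upto:
  assumes "\<forall>m<n. \<gamma> m = \<delta> m" "m \<le> n"
  shows "Xs k s p \<gamma> X0 m = Xs k s p \<delta> X0 m"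
  using assms(2) by (induction m) (use assms(1) in auto)

theorem periodic_uncountable: "\<not> countable (periodic_points (f_sigma k s) p)"
proof
  assume cnt: "countable (periodic_points (f_sigma k s) p)"
  define X0 where "X0 = (\<lambda>j::nat. Eb k s (2*j))"
  have inv: "Inv k s p X0"
    unfolding Inv_def X0_def by (simp add: Eb_len[OF kpos er] sw_Eb[OF kpos er])
  define x where "x \<beta> = bin_val (Wd k s p \<beta> X0 0)" for \<beta>
  have p0: "0 < p" using ppos by simp
  have mem: "x \<beta> \<in> periodic_points (f_sigma k s) p" for \<beta>
    unfolding periodic_points_def
  proof (intro CollectI conjI allI impI)
    show "x \<beta> \<in> {0..1}" unfolding x_def using bv_ge0 bv_le1 by auto
    show "(f_sigma k s ^^ p) (x \<beta>) = x \<beta>"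
      unfolding x_def using f_iter0[OF kpos er opt ppos inv, of p \<beta>] by simp
    fix q assume q: "0 < q \<and> q < p"
    have "(f_sigma k s ^^ q) (x \<beta>) = bin_val (Wd k s p \<beta> X0 (p - q))"
      unfolding x_def using f_iter0[OF kpos er opt ppos inv, of q \<beta>] q by simp
    moreover have "bin_val (Wd k s p \<beta> X0 (p - q)) \<noteq> bin_val (Wd k s p \<beta> X0 0)"
    proof
      assume "bin_val (Wd k s p \<beta> X0 (p - q)) = bin_val (Wd k s p \<beta> X0 0)"
      then have "Wd k s p \<beta> X0 (p - q) = Wd k s p \<beta> X0 0"
        using bv_inj W_ones[OF kpos er opt ppos inv] q p0 by (metis diff_less)
      then show False using W_distinct[of "p - q" \<beta>] q unfolding X0_def by simp
    qed
    ultimately show "(f_sigma k s ^^ q) (x \<beta>) \<noteq> x \<beta>" unfolding x_def by simp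
  qed
  have inj: "inj x"
  proof
    fix \<beta> \<delta> assume xe: "x \<beta> = x \<delta>"
    show "\<beta> = \<delta>"
    proof (rule ccontr)
      assume ne: "\<beta> \<noteq> \<delta>"
      then have ex: "\<exists>n. \<beta> n \<noteq> \<delta> n" by auto
      define n where "n = (LEAST n. \<beta> n \<noteq> \<delta> n)"
      have n1: "\<beta> n \<noteq> \<delta> n" unfolding n_def using ex by (rule LeastI_ex)
      have n2: "\<forall>m<n. \<beta> m = \<delta> m" unfolding n_def using not_less_Least by blast
      have xs: "Xs k s p \<beta> X0 n = Xs k s p \<delta> X0 n" by (rule Xs_eq_upto[OF n2]) simp
      have "Wd k s p \<beta> X0 0 = Wd k s p \<delta> X0 0"
        using bv_inj W_ones[OF kpos er opt ppos inv] xe p0 unfolding x_def by metis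
      moreover have "Wd k s p \<beta> X0 0 \<noteq> Wd k s p \<delta> X0 0"
      proof (cases "\<beta> n")
        case True then show ?thesis using W_split[of \<beta> n \<delta> X0] n1 xs by simp
      next
        case False then show ?thesis using W_split[of \<delta> n \<beta> X0] n1 xs by metis
      qed
      ultimately show False by simp
    qed
  qed
  have "countable (range x)" using cnt mem by (meson countable_subset image_subsetI)
  then have "countable (UNIV :: (nat \<Rightarrow> bool) set)" using inj countable_image_inj_on by blast
  then show False using uncountable_bool_seq by simp
qed

end



lemma sw_funpow_Nil: "(sigma_word k s ^^ m) [] = []"
  by (induction m) auto

context
  fixes k :: nat and s :: "nat \<Rightarrow> bool \<Rightarrow> bool list"
  assumes kpos: "k \<ge> 1" and er: "erasing k s" and opt: "optimal k s"
    and ce: "\<forall>w. \<exists>n. (sigma_word k s ^^ n) w = []"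
begin

lemma density: "{0..1} \<subseteq> closure (\<Union>p \<in> {1..}. periodic_points (f_sigma k s) p)"
proof
  fix y :: real assume y: "y \<in> {0..1}"
  show "y \<in> closure (\<Union>p \<in> {1..}. periodic_points (f_sigma k s) p)"
    unfolding closure_approachable
  proof (intro allI impI)
    fix \<epsilon> :: real assume \<epsilon>: "0 < \<epsilon>"
    obtain M where M: "(1/2::real)^M < \<epsilon>" using real_arch_pow_inv[OF \<epsilon>, of "1/2"] by auto
    define N where "N = k * M"
    have "(1/2::real)^N \<le> (1/2)^M"
      by (rule power_decreasing) (use kpos in \<open>auto simp: N_def\<close>)
    then have NE: "(1/2::real)^N < \<epsilon>" using M by linarith
    obtain u where u: "length u = N" "fin_val u \<le> y" "y \<le> fin_val u + (1/2)^N"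
      using approx[of y N] y by auto
    obtain n0 where n0: "(sigma_word k s ^^ n0) u = []" using ce by blast
    define p where "p = n0 + 2"
    have p1: "p \<ge> 1" "p \<ge> 2" by (simp_all add: p_def)
    have zero: "(sigma_word k s ^^ p) u = []"
    proof -
      have "(sigma_word k s ^^ p) u = (sigma_word k s ^^ 2) ((sigma_word k s ^^ n0) u)"
        unfolding p_def by (simp only: add.commute[of n0 2] funpow_add comp_def)
      then show ?thesis using n0 sw_funpow_Nil by metis
    qed
    have fS: "(sigma_word k s ^^ Suc m) v = sigma_word k s ((sigma_word k s ^^ m) v)" for m v
      by simp
    define X0 where "X0 j = (if j = 0 then u else pad k s ((sigma_word k s ^^ (p - j)) u))" for j
    have inv: "Inv k s p X0"
      unfolding Inv_def
    proof (intro allI impI conjI)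
      fix j assume j: "j < p"
      show "length (X0 j) mod k = 0"
        using pad_len[OF kpos er] u(1) by (simp add: X0_def N_def)
      show "\<exists>r. X0 j = sigma_word k s (X0 (Suc j mod p)) @ r"
      proof (cases "j = 0")
        case True
        have m: "Suc j mod p = 1" using True p1 by simp
        have "sigma_word k s (X0 1) = sigma_word k s ((sigma_word k s ^^ (p - 1)) u)"
          using p1 by (simp add: X0_def sw_pad[OF kpos er])
        also have "\<dots> = (sigma_word k s ^^ p) u" using fS[of "p - 1" u] p1 by simp
        finally have "sigma_word k s (X0 (Suc j mod p)) = []" using zero m by simp
        then show ?thesis by simp
      next
        case False
        have key: "sigma_word k s (X0 (Suc j mod p)) = (sigma_word k s ^^ (p - j)) u"
        proof (cases "Suc j < p")
          case True
          have "sigma_word k s (X0 (Suc j mod p)) = sigma_word k s ((sigma_word k s ^^ (p - Suc j)) u)"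
            using True by (simp add: X0_def sw_pad[OF kpos er])
          also have "\<dots> = (sigma_word k s ^^ Suc (p - Suc j)) u" by simp
          also have "Suc (p - Suc j) = p - j" using True by simp
          finally show ?thesis .
        next
          case False
          then have "Suc j = p" using j by simp
          then have "Suc j mod p = 0" "p - j = 1" by auto
          then show ?thesis by (simp add: X0_def)
        qed
        show ?thesis using False unfolding key by (simp add: X0_def pad_def)
      qed
    qed
    define \<beta> where "\<beta> = (\<lambda>_::nat. False)"
    define w where "w = Wd k s p \<beta> X0 0"
    define x where "x = bin_val w"
    have "w i = u ! i" if "i < N" for i
    proof -
      have "w i = Xs k s p \<beta> X0 0 0 ! i" unfolding w_def
        by (rule W_agree[OF kpos er opt p1(1)]) (use that u(1) in \<open>simp add: X0_def\<close>)
      then show ?thesis by (simp add: X0_def)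
    qed
    then have mw: "map w [0..<N] = u" using u(1) by (intro nth_equalityI) auto
    have xs: "x = fin_val u + (1/2)^N * bin_val (\<lambda>i. w (i + N))"
      unfolding x_def using bv_split[of w N] mw by simp
    have b0: "0 \<le> (1/2::real)^N * bin_val (\<lambda>i. w (i + N))" using bv_ge0 by simp
    have b1: "(1/2::real)^N * bin_val (\<lambda>i. w (i + N)) \<le> (1/2)^N"
      using bv_le1 mult_left_le[of "bin_val (\<lambda>i. w (i + N))" "(1/2::real)^N"] by simp
    have d: "dist x y < \<epsilon>" using xs b0 b1 u NE unfolding dist_real_def by linarith
    have fp: "(f_sigma k s ^^ p) x = x"
      unfolding x_def w_def using f_iter0[OF kpos er opt p1(1) inv, of p \<beta>] by simp
    have ex: "\<exists>q. 0 < q \<and> (f_sigma k s ^^ q) x = x" using fp p1 by (intro exI[of _ p]) simp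
    define q where "q = (LEAST q. 0 < q \<and> (f_sigma k s ^^ q) x = x)"
    have q1: "0 < q \<and> (f_sigma k s ^^ q) x = x" unfolding q_def using ex by (rule LeastI_ex)
    have q2: "\<forall>q'. 0 < q' \<and> q' < q \<longrightarrow> (f_sigma k s ^^ q') x \<noteq> x"
      unfolding q_def using not_less_Least by blast
    have "x \<in> {0..1}" unfolding x_def using bv_ge0 bv_le1 by auto
    then have "x \<in> periodic_points (f_sigma k s) q" unfolding periodic_points_def using q1 q2 by blast
    moreover have "q \<in> {1..}" using q1 by simp
    ultimately show "\<exists>x\<in>\<Union>p \<in> {1..}. periodic_points (f_sigma k s) p. dist x y < \<epsilon>"
      using d by blast
  qed
qed

end

theorem lemma4p6:
  fixes k :: nat and s :: "nat \<Rightarrow> bool \<Rightarrow> bool list"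
  assumes "k \<ge> 2"
    and "completely_erasing k s"
    and "w_eps k s \<noteq> replicate k True"
    and "optimal k s"
  shows "(\<forall>p \<ge> 1. \<not> countable (periodic_points (f_sigma k s) p))
       \<and> {0..1} \<subseteq> closure (\<Union>p \<in> {1..}. periodic_points (f_sigma k s) p)"
proof -
  have k1: "k \<ge> 1" using assms(1) by simp
  have er: "erasing k s" and ce: "\<forall>w. \<exists>n. (sigma_word k s ^^ n) w = []"
    using assms(2) unfolding completely_erasing_def by auto
  show ?thesis
    using periodic_uncountable[OF k1 er assms(4)] density[OF k1 er assms(4) ce] by blast
qed


end
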